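(* Let $\mathbb{O}$ be the real octonion algebra and let $f(x)\in\mathbb{O}[x]$ be a polynomial of degree $2$. Then every root in $\mathbb{O}$ of $f'(x)$ lies in the convex hull (in the real vector space $\mathbb{O}$) of the set of roots in $\mathbb{O}$ of the companion polynomial $C_f(x)$.
   Context: $\mathbb{O}=(-1,-1,-1)_{\mathbb{R}}$ is the real Cayley--Dickson algebra obtained from $\mathbb{R}$ by three doublings $B\{\gamma\}=B\times B$, $(a,b)(c,d)=(ac+\gamma\bar d b,\ da+b\bar c)$, $\overline{(a,b)}=(\bar a,-b)$, with $\gamma=-1$ each time. $\mathbb{O}[x]=\mathbb{O}\otimes_{\mathbb{R}}\mathbb{R}[x]$ with central $x$; $f(x)=a_2x^2+a_1x+a_0$, $a_k\in\mathbb{O}$; substitution $f(r)=\sum_k a_k(r^k)$; $\overline{f(x)}=\sum_k\bar a_kx^k$; companion polynomial $C_f(x)=\overline{f(x)}\cdot f(x)\in\mathbb{R}[x]$. Formal derivative $f'(x)=2a_2x+a_1$. *)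

theory Defs
  imports "HOL-Analysis.Analysis"
begin

text \<open>Cayley--Dickson doubling B{gamma} = B x B with gamma = -1:
  (a,b)(c,d) = (ac + gamma * conj(d) b, d a + b conj(c)),  conj(a,b) = (conj a, -b).\<close>

definition cd_mult :: "('a::ab_group_add \<Rightarrow> 'a \<Rightarrow> 'a) \<Rightarrow> ('a \<Rightarrow> 'a) \<Rightarrow> 'a \<times> 'a \<Rightarrow> 'a \<times> 'a \<Rightarrow> 'a \<times> 'a"
  where "cd_mult m cj x y = (case x of (a, b) \<Rightarrow> case y of (c, d) \<Rightarrow>
           (m a c - m (cj d) b, m d a + m b (cj c)))"

definition cd_cnj :: "('a::ab_group_add \<Rightarrow> 'a) \<Rightarrow> 'a \<times> 'a \<Rightarrow> 'a \<times> 'a"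
  where "cd_cnj cj x = (case x of (a, b) \<Rightarrow> (cj a, - b))"

type_synonym cplx2 = "real \<times> real"
type_synonym quat2 = "cplx2 \<times> cplx2"
type_synonym octonion = "quat2 \<times> quat2"

definition mult1 :: "cplx2 \<Rightarrow> cplx2 \<Rightarrow> cplx2" where "mult1 = cd_mult (*) id"
definition cnj1 :: "cplx2 \<Rightarrow> cplx2" where "cnj1 = cd_cnj id"
definition mult2 :: "quat2 \<Rightarrow> quat2 \<Rightarrow> quat2" where "mult2 = cd_mult mult1 cnj1"
definition cnj2 :: "quat2 \<Rightarrow> quat2" where "cnj2 = cd_cnj cnj1"

text \<open>The real octonion algebra (-1,-1,-1)_R; its real vector space structure is the
  componentwise one on the product type (real^8).\<close>
definition omult :: "octonion \<Rightarrow> octonion \<Rightarrow> octonion" where "omult = cd_mult mult2 cnj2"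
definition ocnj :: "octonion \<Rightarrow> octonion" where "ocnj = cd_cnj cnj2"

definition oone :: octonion where "oone = (((1, 0), (0, 0)), ((0, 0), (0, 0)))"

primrec opow :: "octonion \<Rightarrow> nat \<Rightarrow> octonion" where
  "opow r 0 = oone"
| "opow r (Suc n) = omult r (opow r n)"

text \<open>Polynomials in O[x] (central x) as coefficient lists [a_0, a_1, ...];
  substitution f(r) = sum_k a_k (r^k).\<close>
definition opoly_eval :: "octonion list \<Rightarrow> octonion \<Rightarrow> octonion" where
  "opoly_eval cs r = (\<Sum>k<length cs. omult (cs ! k) (opow r k))"

definition opoly_conj :: "octonion list \<Rightarrow> octonion list" where
  "opoly_conj cs = map ocnj cs"

definition opoly_mult :: "octonion list \<Rightarrow> octonion list \<Rightarrow> octonion list" where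
  "opoly_mult p q = (if p = [] \<or> q = [] then [] else
     map (\<lambda>k. \<Sum>i\<le>k. if i < length p \<and> k - i < length q then omult (p ! i) (q ! (k - i)) else 0)
         [0..<length p + length q - 1])"

definition companion :: "octonion list \<Rightarrow> octonion list" where
  "companion f = opoly_mult (opoly_conj f) f"

definition opoly_deriv :: "octonion list \<Rightarrow> octonion list" where
  "opoly_deriv cs = map (\<lambda>k. scaleR (real (Suc k)) (cs ! Suc k)) [0..<length cs - 1]"

end

theory Submission
  imports Defs
begin


definition oct :: "real \<Rightarrow> real \<Rightarrow> real \<Rightarrow> real \<Rightarrow> real \<Rightarrow> real \<Rightarrow> real \<Rightarrow> real \<Rightarrow> octonion"
  where "oct x0 x1 x2 x3 x4 x5 x6 x7 = (((x0,x1),(x2,x3)),((x4,x5),(x6,x7)))"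

lemma oct_ex: "\<exists>x0 x1 x2 x3 x4 x5 x6 x7. x = oct x0 x1 x2 x3 x4 x5 x6 x7"
  unfolding oct_def by (cases x) auto

lemmas osimps = omult_def mult2_def mult1_def cnj1_def cnj2_def cd_mult_def cd_cnj_def oct_def ocnj_def oone_def zero_prod_def

lemma omult_oone: "omult x oone = x"
  using oct_ex[of x] by (auto simp: osimps)

lemma omult_scaleR: "omult (r *\<^sub>R x) y = r *\<^sub>R omult x y"
  using oct_ex[of x] oct_ex[of y] by (auto simp: osimps algebra_simps)

lemma omult_oone_scaleR: "omult (r *\<^sub>R oone) y = r *\<^sub>R y"
  using oct_ex[of y] by (auto simp: osimps)

lemma deriv_eval: "opoly_eval (opoly_deriv [a0,a1,a2]) z = a1 + 2 *\<^sub>R omult a2 z"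
  by (simp add: opoly_deriv_def opoly_eval_def numeral_2_eq_2 lessThan_Suc omult_oone omult_scaleR)

lemma comp_list: "companion [a0,a1,a2] =
   [omult (ocnj a0) a0, omult (ocnj a0) a1 + omult (ocnj a1) a0,
    omult (ocnj a0) a2 + omult (ocnj a1) a1 + omult (ocnj a2) a0,
    omult (ocnj a1) a2 + omult (ocnj a2) a1, omult (ocnj a2) a2]"
  by (simp add: companion_def opoly_mult_def opoly_conj_def upt_rec numeral_eq_Suc atMost_Suc algebra_simps)

lemma C1: "omult (ocnj x) y + omult (ocnj y) x = (2 * inner x y) *\<^sub>R oone"
  using oct_ex[of x] oct_ex[of y] by (auto simp: osimps inner_prod_def algebra_simps)

lemma C2: "omult (ocnj x) x = inner x x *\<^sub>R oone"
  using oct_ex[of x] by (auto simp: osimps inner_prod_def algebra_simps power2_eq_square)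

lemma comp_real: "companion [a0,a1,a2] = [inner a0 a0 *\<^sub>R oone, (2*inner a0 a1) *\<^sub>R oone,
   (inner a1 a1 + 2*inner a0 a2) *\<^sub>R oone, (2*inner a1 a2) *\<^sub>R oone, inner a2 a2 *\<^sub>R oone]"
proof -
  have "omult (ocnj a0) a2 + omult (ocnj a1) a1 + omult (ocnj a2) a0 = (inner a1 a1 + 2*inner a0 a2) *\<^sub>R oone"
    using C1[of a0 a2] C2[of a1] by (simp add: algebra_simps scaleR_add_left)
  thus ?thesis unfolding comp_list using C1 C2 by simp
qed

lemma I2: "omult a (omult (ocnj a) y) = inner a a *\<^sub>R y"
  using oct_ex[of a] oct_ex[of y] by (auto simp: osimps inner_prod_def algebra_simps power2_eq_square)

definition phi :: "octonion \<Rightarrow> complex \<Rightarrow> octonion" where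
  "phi u z = Re z *\<^sub>R oone + Im z *\<^sub>R u"

lemma phi_mult_gen: "omult (phi (oct 0 u1 u2 u3 u4 u5 u6 u7) a) (phi (oct 0 u1 u2 u3 u4 u5 u6 u7) b)
  = phi (oct 0 u1 u2 u3 u4 u5 u6 u7) (a*b) + (Im a * Im b * (1 - (u1^2+u2^2+u3^2+u4^2+u5^2+u6^2+u7^2))) *\<^sub>R oone"
  by (simp add: osimps phi_def algebra_simps power2_eq_square)

definition imu :: "octonion \<Rightarrow> bool" where
  "imu u \<longleftrightarrow> fst (fst (fst u)) = 0 \<and> inner u u = 1"

lemma phi_mult: assumes "imu u" shows "omult (phi u a) (phi u b) = phi u (a*b)"
proof -
  obtain u0 u1 u2 u3 u4 u5 u6 u7 where u: "u = oct u0 u1 u2 u3 u4 u5 u6 u7" using oct_ex[of u] by blast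
  have u0: "u0 = 0" and s: "u1^2+u2^2+u3^2+u4^2+u5^2+u6^2+u7^2 = 1"
    using assms unfolding imu_def u by (auto simp: oct_def inner_prod_def power2_eq_square)
  show ?thesis using phi_mult_gen[of u1 u2 u3 u4 u5 u6 u7 a b] s unfolding u u0 by simp
qed

lemma phi_one: "phi u 1 = oone" by (simp add: phi_def)

lemma opow_phi: assumes "imu u" shows "opow (phi u a) k = phi u (a^k)"
  by (induction k) (simp_all add: phi_one phi_mult[OF assms])

lemma phi_add: "phi u (a + b) = phi u a + phi u b"
  by (simp add: phi_def algebra_simps scaleR_add_left)

lemma phi_ofreal_mult: "phi u (of_real r * a) = r *\<^sub>R phi u a"
  by (simp add: phi_def algebra_simps)

lemma omult_add_left: "omult (x + y) z = omult x z + omult y z"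
  using oct_ex[of x] oct_ex[of y] oct_ex[of z] by (auto simp: osimps algebra_simps)

lemma phi_ofreal: "phi u (of_real r) = r *\<^sub>R phi u 1"
  by (simp add: phi_def)

lemma eval_phi: assumes "imu u"
  shows "opoly_eval (companion [a0,a1,a2]) (phi u \<rho>) = phi u
     (of_real (inner a0 a0) + of_real (2*inner a0 a1) * \<rho> + of_real (inner a1 a1 + 2*inner a0 a2) * \<rho>^2
      + of_real (2*inner a1 a2) * \<rho>^3 + of_real (inner a2 a2) * \<rho>^4)"
  unfolding comp_real opoly_eval_def
  by (simp add: numeral_eq_Suc lessThan_Suc omult_oone_scaleR omult_add_left opow_phi[OF assms] phi_add phi_ofreal_mult phi_ofreal
       del: opow.simps of_real_add of_real_mult)



lemma Ffact:
  fixes P R T :: real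
  assumes T: "T \<ge> 0"
  shows "\<exists>a b d. b + d - a^2 = P \<and> a*(d-b) = R \<and> b*d = T"
proof (cases "R = 0")
  case True
  show ?thesis
  proof (cases "P^2 \<ge> 4*T")
    case True
    define q where "q = sqrt (P^2 - 4*T)"
    have q2: "q^2 = P^2 - 4*T" unfolding q_def using True by simp
    have "(P - q)/2 + (P+q)/2 - 0^2 = P" by (simp add: field_simps)
    moreover have "((P - q)/2) * ((P+q)/2) = T"
      using q2 by (simp add: power2_eq_square field_simps)
    ultimately show ?thesis using \<open>R = 0\<close> by (metis diff_self mult_zero_left)
  next
    case False
    have sT: "(sqrt T)^2 = T" using T by simp
    have "\<bar>P\<bar> < 2 * sqrt T"
    proof -
      have "P^2 < (2* sqrt T)^2" using False sT by (simp add: power_mult_distrib)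
      thus ?thesis using power2_less_imp_less[of "\<bar>P\<bar>" "2 * sqrt T"] T by simp
    qed
    hence ge: "2* sqrt T - P \<ge> 0" by simp
    define a where "a = sqrt (2* sqrt T - P)"
    have "a^2 = 2* sqrt T - P" unfolding a_def using ge by simp
    hence "sqrt T + sqrt T - a^2 = P" by simp
    moreover have "sqrt T * sqrt T = T" using T by simp
    ultimately show ?thesis using \<open>R = 0\<close> by (metis diff_self mult_zero_right)
  qed
next
  case False
  define h where "h = (\<lambda>y::real. y*(P+y)^2 - 4*T*y - R^2)"
  define Y where "Y = \<bar>P\<bar> + 4*T + R^2 + 1"
  have Y1: "Y \<ge> 1" unfolding Y_def using T by simp
  have h0: "h 0 \<le> 0" unfolding h_def by simp
  have hY: "0 \<le> h Y"
  proof -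
    have "P + Y \<ge> 4*T + R^2 + 1" unfolding Y_def by simp
    hence ge1: "P + Y \<ge> 1" using T by (smt (verit) zero_le_power2)
    have "(P+Y)^2 \<ge> P + Y" using ge1 by (simp add: power2_eq_square)
    hence "(P+Y)^2 \<ge> 4*T + R^2 + 1" using \<open>P + Y \<ge> 4*T + R^2 + 1\<close> by linarith
    hence "Y*(P+Y)^2 \<ge> Y*(4*T + R^2 + 1)" using Y1 by (intro mult_left_mono) auto
    moreover have "Y*R^2 \<ge> R^2" using Y1 by (simp add: mult_le_cancel_right1)
    ultimately show ?thesis using Y1 unfolding h_def by (simp add: algebra_simps)
  qed
  have "continuous_on {0..Y} h" unfolding h_def by (intro continuous_intros)
  then obtain y where y: "0 \<le> y" "y \<le> Y" "h y = 0"
    using IVT'[of h 0 0 Y] h0 hY Y1 by auto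
  have "y \<noteq> 0" using y(3) False unfolding h_def by auto
  hence yp: "y > 0" using y(1) by simp
  define a where "a = sqrt y"
  have a2: "a^2 = y" unfolding a_def using yp by simp
  have ap: "a > 0" unfolding a_def using yp by simp
  define b where "b = (P + y - R/a)/2"
  define d where "d = (P + y + R/a)/2"
  have "b + d - a^2 = P" unfolding b_def d_def using a2 by (simp add: field_simps)
  moreover have "a*(d-b) = R" unfolding b_def d_def using ap by (simp add: field_simps)
  moreover have "b*d = T"
  proof -
    have "b*d = ((P+y)^2 - R^2/a^2)/4" unfolding b_def d_def using ap
      by (simp add: power2_eq_square field_simps)
    also have "\<dots> = ((P+y)^2 - R^2/y)/4" using a2 by simp
    also have "\<dots> = T" using y(3) yp unfolding h_def by (simp add: field_simps power2_eq_square)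
    finally show ?thesis .
  qed
  ultimately show ?thesis by blast
qed

lemma L1:
  fixes A V K WW :: real
  assumes V: "V \<ge> 0" and WW: "WW \<ge> 0" and CS: "K^2 \<le> WW * V"
  shows "\<exists>al b1 b2. b1 \<ge> 0 \<and> b2 \<ge> 0 \<and> (al^2+b1^2)+(al^2+b2^2)-4*al^2 = 2*A+4*V
     \<and> 2*al*((al^2+b1^2)-(al^2+b2^2)) = -4*K \<and> (al^2+b1^2)*(al^2+b2^2) = A^2+WW"
proof -
  define p where "p = (\<lambda>s. (s::real)^4 + (2*A+4*V)* s^2 - 4*K* s + A^2 + WW)"
  have qnn: "WW - 4*K* s + 4* s^2*V \<ge> 0" for s
  proof (cases "V = 0")
    case True
    then have "K = 0" using CS by simp
    then show ?thesis using True WW by simp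
  next
    case False
    hence Vp: "V > 0" using V by simp
    have "4*V*(WW - 4*K* s + 4* s^2*V) = (4*V* s - 2*K)^2 + 4*(V*WW - K^2)"
      by (simp add: power2_eq_square algebra_simps)
    also have "\<dots> \<ge> 0" using CS zero_le_power2[of "4*V* s - 2*K"] by (simp add: mult.commute)
    finally show ?thesis using Vp by (simp add: zero_le_mult_iff)
  qed
  have pe: "p s = (s^2+A)^2 + (WW - 4*K* s + 4* s^2*V)" for s
    unfolding p_def by (simp add: power2_eq_square power4_eq_xxxx algebra_simps)
  show ?thesis
  proof (cases "\<exists>s0. p s0 = 0")
    case True
    then obtain s0 where s0: "p s0 = 0" by blast
    have z1: "(s0^2+A)^2 = 0" and z2: "WW - 4*K* s0 + 4* s0^2*V = 0"
      using s0 pe[of s0] qnn[of s0] zero_le_power2[of "s0^2+A"] by linarith+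
    have A: "A = - (s0^2)" using z1 by simp
    have WWe: "WW = 4*K* s0 - 4* s0^2*V" using z2 by simp
    have "(K - 2* s0*V)^2 \<le> 0"
    proof -
      have "(K - 2* s0*V)^2 = K^2 - (4*K* s0 - 4* s0^2*V)*V" by (simp add: power2_eq_square algebra_simps)
      thus ?thesis using CS WWe V by simp
    qed
    hence Ke: "K = 2* s0*V" by simp
    have sV: "(2* sqrt V)^2 = 4*V" using V by (simp add: power_mult_distrib)
    show ?thesis
    proof (intro exI conjI)
      show "(0::real) \<le> 0" by simp
      show "0 \<le> 2* sqrt V" using V by simp
      show "(s0^2+0^2)+(s0^2+(2* sqrt V)^2)-4* s0^2 = 2*A+4*V" using sV A by simp
      show "2* s0*((s0^2+0^2)-(s0^2+(2* sqrt V)^2)) = -4*K" using sV Ke by (simp add: algebra_simps)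
      show "(s0^2+0^2)*(s0^2+(2* sqrt V)^2) = A^2+WW" using sV A WWe Ke
        by (simp add: power2_eq_square algebra_simps)
    qed
  next
    case False
    have T: "A^2 + WW \<ge> 0" using WW by simp
    obtain a b d where abd: "b + d - a^2 = 2*A+4*V" "a*(d-b) = -4*K" "b*d = A^2+WW"
      using Ffact[OF T] by blast
    have fac: "p s = (s^2+a* s+b)*(s^2-a* s+d)" for s
    proof -
      have "(s^2+a* s+b)*(s^2-a* s+d) = s^4 + (b+d-a^2)* s^2 + a*(d-b)* s + b*d"
        by (simp add: power2_eq_square power4_eq_xxxx algebra_simps)
      thus ?thesis unfolding p_def using abd by simp
    qed
    have bg: "b - a^2/4 > 0"
    proof (rule ccontr)
      assume nn: "\<not> b - a^2/4 > 0"
      define s where "s = -a/2 + sqrt (a^2/4 - b)"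
      have "(sqrt (a^2/4 - b))^2 = a^2/4 - b" using nn by simp
      moreover have "s + a/2 = sqrt (a^2/4 - b)" unfolding s_def by simp
      moreover have "s^2+a* s+b = (s + a/2)^2 - (a^2/4 - b)" by (simp add: power2_eq_square algebra_simps)
      ultimately have "s^2+a* s+b = 0" by simp
      thus False using False fac[of s] by auto
    qed
    have dg: "d - a^2/4 > 0"
    proof (rule ccontr)
      assume nn: "\<not> d - a^2/4 > 0"
      define s where "s = a/2 + sqrt (a^2/4 - d)"
      have "(sqrt (a^2/4 - d))^2 = a^2/4 - d" using nn by simp
      moreover have "s - a/2 = sqrt (a^2/4 - d)" unfolding s_def by simp
      moreover have "s^2-a* s+d = (s - a/2)^2 - (a^2/4 - d)" by (simp add: power2_eq_square algebra_simps)
      ultimately have "s^2-a* s+d = 0" by simp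
      thus False using False fac[of s] by auto
    qed
    have n1: "(-a/2)^2 + (sqrt (b - a^2/4))^2 = b"
    proof -
      have "(sqrt (b - a^2/4))^2 = b - a^2/4" using bg by simp
      moreover have "(-a/2)^2 = a^2/4" by (simp add: power2_eq_square)
      ultimately show ?thesis by simp
    qed
    have n2: "(-a/2)^2 + (sqrt (d - a^2/4))^2 = d"
    proof -
      have "(sqrt (d - a^2/4))^2 = d - a^2/4" using dg by simp
      moreover have "(-a/2)^2 = a^2/4" by (simp add: power2_eq_square)
      ultimately show ?thesis by simp
    qed
    show ?thesis
    proof (intro exI conjI)
      show "0 \<le> sqrt (b - a^2/4)" "0 \<le> sqrt (d - a^2/4)" using bg dg by simp_all
      show "((-a/2)^2 + (sqrt (b - a^2/4))^2) + ((-a/2)^2 + (sqrt (d - a^2/4))^2) - 4*(-a/2)^2 = 2*A+4*V"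
        using n1 n2 abd(1) by (simp add: power2_eq_square)
      show "2*(-a/2)*(((-a/2)^2 + (sqrt (b - a^2/4))^2) - ((-a/2)^2 + (sqrt (d - a^2/4))^2)) = -4*K"
        using n1 n2 abd(2) by (simp add: algebra_simps)
      show "((-a/2)^2 + (sqrt (b - a^2/4))^2) * ((-a/2)^2 + (sqrt (d - a^2/4))^2) = A^2+WW"
        using n1 n2 abd(3) by simp
    qed
  qed
qed



lemma L2:
  fixes A V K WW al b1 b2 :: real
  assumes b1: "b1 \<ge> 0" and b2: "b2 \<ge> 0" and V: "V \<ge> 0" and CS: "K^2 \<le> WW * V"
  and E1: "(al^2+b1^2)+(al^2+b2^2)-4*al^2 = 2*A+4*V"
  and E2: "2*al*((al^2+b1^2)-(al^2+b2^2)) = -4*K"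
  and E3: "(al^2+b1^2)*(al^2+b2^2) = A^2+WW"
  shows "4*V \<le> (b1+b2)^2"
proof (rule ccontr)
  assume "\<not> ?thesis"
  define D where "D = -(A + al^2 + b1*b2)"
  define M where "M = al^2 + b1*b2"
  define P0 where "P0 = al^2*(b1-b2)^2"
  define S where "S = (b1+b2)^2"
  have V4: "4*V = S + 2*D" using E1 unfolding S_def D_def by (simp add: power2_eq_square algebra_simps)
  hence Dp: "D > 0" using \<open>\<not> 4*V \<le> (b1+b2)^2\<close> S_def by simp
  have Mp: "M \<ge> al^2" unfolding M_def using b1 b2 by simp
  have WWe: "WW = P0 - 2*D*M - D^2"
  proof -
    have "A^2 = M^2 + 2*D*M + D^2" unfolding D_def M_def by (simp add: power2_eq_square algebra_simps)
    moreover have "(al^2+b1^2)*(al^2+b2^2) = P0 + M^2" unfolding P0_def M_def by (simp add: power2_eq_square algebra_simps)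
    ultimately show ?thesis using E3 by simp
  qed
  have K4: "4*K^2 = P0*S"
  proof -
    have "2*K = -al*(b1^2-b2^2)" using E2 by (simp add: algebra_simps)
    have "4*K^2 = (2*K)^2" by (simp add: power2_eq_square)
    also have "\<dots> = (-al*(b1^2-b2^2))^2" using \<open>2*K = _\<close> by simp
    also have "\<dots> = al^2*(b1^2-b2^2)^2" by (simp add: power2_eq_square algebra_simps)
    also have "\<dots> = P0*S" unfolding P0_def S_def by (simp add: power2_eq_square algebra_simps)
    finally show ?thesis .
  qed
  have "P0*S \<le> WW*(4*V)" using CS K4 by simp
  hence "P0*S \<le> (P0 - 2*D*M - D^2)*(S+2*D)" using WWe V4 by simp
  hence i1: "(2*D*M + D^2)*(S+2*D) \<le> 2*D*P0" by (simp add: algebra_simps)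
  have "P0 \<le> al^2*S" unfolding P0_def S_def using b1 b2
    by (intro mult_left_mono) (auto simp: power2_eq_square algebra_simps)
  also have "\<dots> \<le> M*S" using Mp S_def by (intro mult_right_mono) auto
  finally have "2*D*P0 \<le> 2*D*(M*S)" using Dp by simp
  moreover have "2*D*(M*S) < (2*D*M + D^2)*(S+2*D)"
  proof -
    have "M \<ge> 0" using Mp by (meson order.trans zero_le_power2)
    have "(2*D*M + D^2)*(S+2*D) = 2*D*(M*S) + 4*D^2*M + D^2*S + 2*D^3"
      by (simp add: power2_eq_square power3_eq_cube algebra_simps)
    moreover have "4*D^2*M \<ge> 0" using \<open>M \<ge> 0\<close> by simp
    moreover have "D^2*S \<ge> 0" unfolding S_def by simp
    moreover have "2*D^3 > 0" using Dp by simp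
    ultimately show ?thesis by linarith
  qed
  ultimately show False using i1 by linarith
qed



lemma polyA: fixes s m A V K WW :: "'a::comm_ring_1" shows
  "((A+m^2)^2 + WW + 4*m*K + 4*m^2*V) + (-4*((A+m^2)*m + K + 2*m*V))*(m+s) + (4*(m^2+V) + 2*(A+m^2))*(m+s)^2 + (-4*m)*(m+s)^3 + (m+s)^4
   = s^4 + (2*A+4*V)* s^2 - 4*K* s + (A^2 + WW)"
  by (simp add: algebra_simps power2_eq_square power3_eq_cube power4_eq_xxxx)

lemma polyB: fixes s al b1 b2 A V K WW :: "'a::comm_ring_1"
  assumes E1: "(al^2+b1^2)+(al^2+b2^2)-4*al^2 = 2*A+4*V"
  and E2: "2*al*((al^2+b1^2)-(al^2+b2^2)) = -4*K"
  and E3: "(al^2+b1^2)*(al^2+b2^2) = A^2+WW"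
  shows "s^4 + (2*A+4*V)* s^2 - 4*K* s + (A^2 + WW) = ((s-al)^2+b1^2)*((s+al)^2+b2^2)"
proof -
  have "((s-al)^2+b1^2)*((s+al)^2+b2^2) = s^4 + ((al^2+b1^2)+(al^2+b2^2)-4*al^2)* s^2
     + 2*al*((al^2+b1^2)-(al^2+b2^2))* s + (al^2+b1^2)*(al^2+b2^2)"
    by (simp add: algebra_simps power2_eq_square power3_eq_cube power4_eq_xxxx)
  thus ?thesis using E1 E2 E3 by simp
qed



lemma I1: "inner (omult (oct a0 a1 a2 a3 a4 a5 a6 a7) (oct x0 x1 x2 x3 x4 x5 x6 x7))
   (omult (oct a0 a1 a2 a3 a4 a5 a6 a7) (oct y0 y1 y2 y3 y4 y5 y6 y7)) =
   inner (oct a0 a1 a2 a3 a4 a5 a6 a7) (oct a0 a1 a2 a3 a4 a5 a6 a7) * inner (oct x0 x1 x2 x3 x4 x5 x6 x7) (oct y0 y1 y2 y3 y4 y5 y6 y7)"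
  by (simp add: osimps inner_prod_def algebra_simps)

lemma I1g: "inner (omult a x) (omult a y) = inner a a * inner x y"
proof -
  obtain a0 a1 a2 a3 a4 a5 a6 a7 where "a = oct a0 a1 a2 a3 a4 a5 a6 a7" using oct_ex[of a] by blast
  moreover obtain x0 x1 x2 x3 x4 x5 x6 x7 where "x = oct x0 x1 x2 x3 x4 x5 x6 x7" using oct_ex[of x] by blast
  moreover obtain y0 y1 y2 y3 y4 y5 y6 y7 where "y = oct y0 y1 y2 y3 y4 y5 y6 y7" using oct_ex[of y] by blast
  ultimately show ?thesis using I1 by simp
qed

lemma omult_scaleR_right: "omult x (r *\<^sub>R y) = r *\<^sub>R omult x y"
  using oct_ex[of x] oct_ex[of y] by (auto simp: osimps algebra_simps)

lemma hull_comb: "x \<in> convex hull S \<Longrightarrow> y \<in> convex hull S \<Longrightarrow> 0 \<le> w \<Longrightarrow> w \<le> 1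
   \<Longrightarrow> w *\<^sub>R x + (1-w) *\<^sub>R y \<in> convex hull S"
  by (rule convexD[OF convex_convex_hull]) auto

lemma ball_in_hull:
  fixes C b t :: real and u :: octonion
  assumes X: "C *\<^sub>R oone + b *\<^sub>R u \<in> S" and Y: "C *\<^sub>R oone + b *\<^sub>R (-u) \<in> S"
    and t0: "0 \<le> t" and tb: "t \<le> b"
  shows "C *\<^sub>R oone + t *\<^sub>R u \<in> convex hull S"
proof (cases "b = 0")
  case True
  then have "t = 0" using t0 tb by simp
  then show ?thesis using X True by (simp add: hull_inc)
next
  case False
  hence bp: "b > 0" using t0 tb by simp
  define w where "w = 1/2 + t/(2*b)"
  have w0: "0 \<le> w" unfolding w_def using bp t0 by simp
  have w1: "w \<le> 1" unfolding w_def using bp tb by (simp add: field_simps)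
  have tt: "w*b - (1-w)*b = t" unfolding w_def using bp by (simp add: field_simps)
  have "w *\<^sub>R (C *\<^sub>R oone + b *\<^sub>R u) + (1-w) *\<^sub>R (C *\<^sub>R oone + b *\<^sub>R (-u))
     = C *\<^sub>R oone + (w*b - (1-w)*b) *\<^sub>R u"
    using oct_ex[of u] by (auto simp: oct_def oone_def algebra_simps)
  hence "w *\<^sub>R (C *\<^sub>R oone + b *\<^sub>R u) + (1-w) *\<^sub>R (C *\<^sub>R oone + b *\<^sub>R (-u)) = C *\<^sub>R oone + t *\<^sub>R u"
    using tt by simp
  moreover have "w *\<^sub>R (C *\<^sub>R oone + b *\<^sub>R u) + (1-w) *\<^sub>R (C *\<^sub>R oone + b *\<^sub>R (-u)) \<in> convex hull S"
    using hull_comb[OF hull_inc[OF X] hull_inc[OF Y] w0 w1] .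
  ultimately show ?thesis by simp
qed

theorem theorem4p3:
  fixes a0 a1 a2 :: octonion
  assumes "a2 \<noteq> 0"
  shows "{z. opoly_eval (opoly_deriv [a0, a1, a2]) z = 0}
           \<subseteq> convex hull {r. opoly_eval (companion [a0, a1, a2]) r = 0}"
proof
  fix z assume "z \<in> {z. opoly_eval (opoly_deriv [a0, a1, a2]) z = 0}"
  hence hz: "a1 + 2 *\<^sub>R omult a2 z = 0" by (simp add: deriv_eval)
  define Rt where "Rt = {r. opoly_eval (companion [a0, a1, a2]) r = 0}"
  define N where "N = inner a2 a2"
  have Np: "N > 0" using assms by (simp add: N_def)
  define c where "c = (1/N) *\<^sub>R omult (ocnj a2) a0"
  have a0c: "a0 = omult a2 c" unfolding c_def using Np
    by (simp add: omult_scaleR_right I2 N_def[symmetric])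
  have a1z: "a1 = (-2) *\<^sub>R omult a2 z" using hz by (simp add: eq_neg_iff_add_eq_0 add.commute)
  have a2o: "omult a2 oone = a2" by (rule omult_oone)
  have k3: "2*inner a1 a2 = -4*N*inner z oone"
    using I1g[of a2 z oone] unfolding a1z a2o N_def by simp
  have k2: "inner a1 a1 + 2*inner a0 a2 = N*(4*inner z z + 2*inner c oone)"
    using I1g[of a2 z z] I1g[of a2 c oone] unfolding a1z a0c a2o N_def by (simp add: algebra_simps)
  have k1: "2*inner a0 a1 = -4*N*inner c z"
    using I1g[of a2 c z] unfolding a1z a0c N_def by simp
  have k0: "inner a0 a0 = N*inner c c"
    using I1g[of a2 c c] unfolding a0c N_def by simp
  have k4: "inner a2 a2 = N" by (simp add: N_def)
  obtain m z1 z2 z3 z4 z5 z6 z7 where zo: "z = oct m z1 z2 z3 z4 z5 z6 z7" using oct_ex[of z] by blast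
  obtain c0 c1 c2 c3 c4 c5 c6 c7 where co: "c = oct c0 c1 c2 c3 c4 c5 c6 c7" using oct_ex[of c] by blast
  define V where "V = z1^2+z2^2+z3^2+z4^2+z5^2+z6^2+z7^2"
  define w1 where "w1 = c1 - 2*m*z1"
  define w2 where "w2 = c2 - 2*m*z2"
  define w3 where "w3 = c3 - 2*m*z3"
  define w4 where "w4 = c4 - 2*m*z4"
  define w5 where "w5 = c5 - 2*m*z5"
  define w6 where "w6 = c6 - 2*m*z6"
  define w7 where "w7 = c7 - 2*m*z7"
  define K where "K = w1*z1+w2*z2+w3*z3+w4*z4+w5*z5+w6*z6+w7*z7"
  define WW where "WW = w1^2+w2^2+w3^2+w4^2+w5^2+w6^2+w7^2"
  define A where "A = c0 - m^2"
  have V0: "V \<ge> 0" unfolding V_def by simp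
  have WW0: "WW \<ge> 0" unfolding WW_def by simp
  have CS: "K^2 \<le> WW * V"
  proof -
    have "(inner (oct 0 w1 w2 w3 w4 w5 w6 w7) (oct 0 z1 z2 z3 z4 z5 z6 z7))^2 \<le>
      inner (oct 0 w1 w2 w3 w4 w5 w6 w7) (oct 0 w1 w2 w3 w4 w5 w6 w7) * inner (oct 0 z1 z2 z3 z4 z5 z6 z7) (oct 0 z1 z2 z3 z4 z5 z6 z7)"
      by (rule Cauchy_Schwarz_ineq)
    thus ?thesis unfolding K_def WW_def V_def by (simp add: oct_def inner_prod_def power2_eq_square algebra_simps)
  qed
  have izo: "inner z oone = m" unfolding zo by (simp add: oct_def oone_def inner_prod_def)
  have izz: "inner z z = m^2 + V" unfolding zo V_def by (simp add: oct_def inner_prod_def power2_eq_square)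
  have ico: "inner c oone = A + m^2" unfolding co A_def by (simp add: oct_def oone_def inner_prod_def)
  have icz: "inner c z = (A+m^2)*m + K + 2*m*V" unfolding co zo A_def K_def V_def w1_def w2_def w3_def w4_def w5_def w6_def w7_def
    by (simp add: oct_def inner_prod_def power2_eq_square algebra_simps)
  have icc: "inner c c = (A+m^2)^2 + WW + 4*m*K + 4*m^2*V" unfolding co A_def K_def V_def WW_def w1_def w2_def w3_def w4_def w5_def w6_def w7_def
    by (simp add: oct_def inner_prod_def power2_eq_square algebra_simps)
  obtain al b1 b2 where b1: "b1 \<ge> 0" and b2: "b2 \<ge> 0"
    and E1: "(al^2+b1^2)+(al^2+b2^2)-4*al^2 = 2*A+4*V"
    and E2: "2*al*((al^2+b1^2)-(al^2+b2^2)) = -4*K"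
    and E3: "(al^2+b1^2)*(al^2+b2^2) = A^2+WW"
    using L1[OF V0 WW0 CS] by blast
  have bV: "4*V \<le> (b1+b2)^2" by (rule L2[OF b1 b2 V0 CS E1 E2 E3])
  have c0': "inner a0 a0 = N * ((A+m^2)^2 + WW + 4*m*K + 4*m^2*V)" using k0 icc by simp
  have c1': "2*inner a0 a1 = N * (-4*((A+m^2)*m + K + 2*m*V))" using k1 icz by (simp add: algebra_simps)
  have c2': "inner a1 a1 + 2*inner a0 a2 = N*(4*(m^2+V) + 2*(A+m^2))" using k2 izz ico by simp
  have c3': "2*inner a1 a2 = N*(-4*m)" using k3 izo by simp
  have E1c: "(complex_of_real al^2+complex_of_real b1^2)+(complex_of_real al^2+complex_of_real b2^2)-4*complex_of_real al^2
     = 2*complex_of_real A+4*complex_of_real V"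
    using arg_cong[OF E1, of complex_of_real] by simp
  have E2c: "2*complex_of_real al*((complex_of_real al^2+complex_of_real b1^2)-(complex_of_real al^2+complex_of_real b2^2))
     = -4*complex_of_real K"
    using arg_cong[OF E2, of complex_of_real] by simp
  have E3c: "(complex_of_real al^2+complex_of_real b1^2)*(complex_of_real al^2+complex_of_real b2^2)
     = complex_of_real A^2+complex_of_real WW"
    using arg_cong[OF E3, of complex_of_real] by simp
  have polyE: "of_real (inner a0 a0) + of_real (2*inner a0 a1) * \<rho> + of_real (inner a1 a1 + 2*inner a0 a2) * \<rho>^2
      + of_real (2*inner a1 a2) * \<rho>^3 + of_real (inner a2 a2) * \<rho>^4
     = of_real N * ((((\<rho> - of_real m) - of_real al)^2 + (of_real b1)^2) * (((\<rho> - of_real m) + of_real al)^2 + (of_real b2)^2))"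
    for \<rho> :: complex
  proof -
    define s where "s = \<rho> - of_real m"
    have rs: "\<rho> = of_real m + s" unfolding s_def by simp
    have "of_real (inner a0 a0) + of_real (2*inner a0 a1) * \<rho> + of_real (inner a1 a1 + 2*inner a0 a2) * \<rho>^2
      + of_real (2*inner a1 a2) * \<rho>^3 + of_real (inner a2 a2) * \<rho>^4
      = of_real N * ((((of_real A)+(of_real m)^2)^2 + of_real WW + 4* of_real m* of_real K + 4*(of_real m)^2* of_real V)
         + (-4*(((of_real A)+(of_real m)^2)* of_real m + of_real K + 2* of_real m* of_real V))*(of_real m+s)
         + (4*((of_real m)^2+ of_real V) + 2*(of_real A+(of_real m)^2))*(of_real m+s)^2 + (-4* of_real m)*(of_real m+s)^3 + (of_real m+s)^4)"
      unfolding c0' c1' c2' c3' k4 rs by (simp add: algebra_simps)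
    also have "\<dots> = of_real N * (s^4 + (2* of_real A+4* of_real V)* s^2 - 4* of_real K* s + ((of_real A)^2 + of_real WW))"
      by (simp only: polyA)
    also have "\<dots> = of_real N * (((s - of_real al)^2 + (of_real b1)^2) * ((s + of_real al)^2 + (of_real b2)^2))"
      by (simp only: polyB[OF E1c E2c E3c])
    finally show ?thesis unfolding s_def .
  qed
  have root: "phi u' \<rho> \<in> Rt" if "imu u'" "((\<rho> - of_real m) - of_real al)^2 + (of_real b1)^2 = 0 \<or>
     ((\<rho> - of_real m) + of_real al)^2 + (of_real b2)^2 = 0" for u' \<rho>
  proof -
    have "opoly_eval (companion [a0,a1,a2]) (phi u' \<rho>) = phi u' 0"
      unfolding eval_phi[OF that(1)] polyE using that(2) by auto
    thus ?thesis unfolding Rt_def by (simp add: phi_def)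
  qed
  define \<rho>1 where "\<rho>1 = complex_of_real (m + al) + \<i> * of_real b1"
  define \<rho>2 where "\<rho>2 = complex_of_real (m - al) + \<i> * of_real b2"
  have r1: "((\<rho>1 - of_real m) - of_real al)^2 + (of_real b1)^2 = 0"
  proof -
    have "(\<rho>1 - of_real m) - of_real al = \<i> * of_real b1" unfolding \<rho>1_def by simp
    thus ?thesis by (simp add: power_mult_distrib)
  qed
  have r2: "((\<rho>2 - of_real m) + of_real al)^2 + (of_real b2)^2 = 0"
  proof -
    have "(\<rho>2 - of_real m) + of_real al = \<i> * of_real b2" unfolding \<rho>2_def by simp
    thus ?thesis by (simp add: power_mult_distrib)
  qed
  define nv where "nv = sqrt V"
  define v where "v = oct 0 z1 z2 z3 z4 z5 z6 z7"
  define u where "u = (if V = 0 then oct 0 1 0 0 0 0 0 0 else (1/nv) *\<^sub>R v)"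
  have ivv: "inner v v = V" unfolding v_def V_def by (simp add: oct_def inner_prod_def power2_eq_square)
  have imu: "imu u"
  proof (cases "V = 0")
    case True
    then show ?thesis unfolding u_def imu_def by (simp add: oct_def inner_prod_def)
  next
    case False
    hence "nv > 0" unfolding nv_def using V0 by simp
    moreover have "nv^2 = V" unfolding nv_def using V0 by simp
    ultimately have "inner u u = 1" unfolding u_def using False ivv by (simp add: power2_eq_square)
    moreover have "fst (fst (fst u)) = 0" unfolding u_def v_def using False by (simp add: oct_def)
    ultimately show ?thesis unfolding imu_def by simp
  qed
  have imum: "imu (-u)" using imu unfolding imu_def by simp
  have zdec: "z = m *\<^sub>R oone + nv *\<^sub>R u"
  proof (cases "V = 0")
    case True
    hence "z1 = 0 \<and> z2 = 0 \<and> z3 = 0 \<and> z4 = 0 \<and> z5 = 0 \<and> z6 = 0 \<and> z7 = 0" unfolding V_def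
      by (simp add: add_nonneg_eq_0_iff add_nonneg_nonneg)
    thus ?thesis unfolding zo nv_def using True by (simp add: oct_def oone_def)
  next
    case False
    hence "nv > 0" unfolding nv_def using V0 by simp
    hence "nv *\<^sub>R u = v" unfolding u_def using False by simp
    thus ?thesis unfolding zo v_def by (simp add: oct_def oone_def)
  qed
  have phi1: "phi u' \<rho>1 = (m + al) *\<^sub>R oone + b1 *\<^sub>R u'" for u' unfolding \<rho>1_def phi_def by simp
  have phi2: "phi u' \<rho>2 = (m - al) *\<^sub>R oone + b2 *\<^sub>R u'" for u' unfolding \<rho>2_def phi_def by simp
  have nv0: "nv \<ge> 0" unfolding nv_def using V0 by simp
  have nvb: "2*nv \<le> b1 + b2"
  proof -
    have "sqrt (4*V) \<le> sqrt ((b1+b2)^2)" using bV by (rule real_sqrt_le_mono)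
    moreover have "sqrt (4*V) = 2*nv" unfolding nv_def by (simp add: real_sqrt_mult)
    moreover have "sqrt ((b1+b2)^2) = b1 + b2" using b1 b2 by simp
    ultimately show ?thesis by simp
  qed
  define t1 where "t1 = min b1 (2*nv)"
  define t2 where "t2 = 2*nv - t1"
  have Q1: "(m + al) *\<^sub>R oone + t1 *\<^sub>R u \<in> convex hull Rt"
    by (rule ball_in_hull) (use root[OF imu, of \<rho>1] root[OF imum, of \<rho>1] r1 phi1 b1 nv0 in \<open>auto simp: t1_def\<close>)
  have Q2: "(m - al) *\<^sub>R oone + t2 *\<^sub>R u \<in> convex hull Rt"
    by (rule ball_in_hull) (use root[OF imu, of \<rho>2] root[OF imum, of \<rho>2] r2 phi2 b2 nv0 nvb in \<open>auto simp: t1_def t2_def\<close>)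
  have "(1/2) *\<^sub>R ((m + al) *\<^sub>R oone + t1 *\<^sub>R u) + (1 - 1/2) *\<^sub>R ((m - al) *\<^sub>R oone + t2 *\<^sub>R u) \<in> convex hull Rt"
    by (rule hull_comb[OF Q1 Q2]) auto
  moreover have "(1/2) *\<^sub>R ((m + al) *\<^sub>R oone + t1 *\<^sub>R u) + (1 - 1/2) *\<^sub>R ((m - al) *\<^sub>R oone + t2 *\<^sub>R u)
     = m *\<^sub>R oone + nv *\<^sub>R u"
    unfolding t2_def using oct_ex[of u] by (auto simp: oct_def oone_def field_simps)
  ultimately have "z \<in> convex hull Rt" using zdec by simp
  thus "z \<in> convex hull {r. opoly_eval (companion [a0, a1, a2]) r = 0}" unfolding Rt_def .
qed
end
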